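(* Let $\mathcal{F}$ be a complete lattice cone of functions on a set $\Omega$ which contains all real constant functions. Let $p\in\mathcal{F}$ be real-valued and let $\xi\colon\mathbb{R}\to\mathbb{R}$ be convex and non-decreasing. Then $\xi\circ p\in\mathcal{F}$.
   Context: A complete lattice cone is a set of functions on $\Omega$ with values in $(-\infty,\infty]$, closed under nonnegative linear combinations and under pointwise suprema of arbitrary families. *)

theory Defs
  imports "HOL-Analysis.Analysis"
begin

text \<open>Functions on \<Omega> with values in (-\<infinity>,\<infinity>] are modelled as functions into ereal
  that never take the value -\<infinity>.  A complete lattice cone is a set of such
  functions closed under nonnegative linear combinations (with the usual
  convention 0 * \<infinity> = 0 of ereal) and under pointwise suprema of arbitrary
  nonempty families.\<close>

definition complete_lattice_cone :: "('a \<Rightarrow> ereal) set \<Rightarrow> bool" where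
  "complete_lattice_cone F \<longleftrightarrow>
     (\<forall>f\<in>F. \<forall>x. f x \<noteq> -\<infinity>) \<and>
     (\<forall>f\<in>F. \<forall>g\<in>F. \<forall>a b :: real. a \<ge> 0 \<longrightarrow> b \<ge> 0 \<longrightarrow>
        (\<lambda>x. ereal a * f x + ereal b * g x) \<in> F) \<and>
     (\<forall>G. G \<subseteq> F \<longrightarrow> G \<noteq> {} \<longrightarrow> (\<lambda>x. SUP g\<in>G. g x) \<in> F)"

end

theory Submission
  imports Defs
begin

lemma slope_mono3:
  fixes f :: "real \<Rightarrow> real"
  assumes "convex_on UNIV f" "y < t" "t < z"
  shows "(f t - f y) / (t - y) \<le> (f z - f t) / (z - t)"
proof -
  have "(f y - f t) / (y - t) \<le> (f y - f z) / (y - z)"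
       "(f y - f z) / (y - z) \<le> (f t - f z) / (t - z)"
    using convex_on_slope_le[OF assms(1) UNIV_I UNIV_I assms(2,3)] by blast+
  moreover have "(f y - f t) / (y - t) = (f t - f y) / (t - y)"
    by (metis minus_diff_eq minus_divide_divide)
  moreover have "(f t - f z) / (t - z) = (f z - f t) / (z - t)"
    by (metis minus_diff_eq minus_divide_divide)
  ultimately show ?thesis by linarith
qed

lemma subgrad:
  fixes f :: "real \<Rightarrow> real"
  assumes cv: "convex_on UNIV f" and mo: "mono f"
  shows "\<exists>s\<ge>0. \<forall>y. f y \<ge> f t + s * (y - t)"
proof -
  define S where "S = {(f t - f y) / (t - y) | y. y < t}"
  define s where "s = Sup S"
  have ne: "S \<noteq> {}" unfolding S_def by (auto intro!: exI[of _ "t - 1"])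
  have bd: "\<And>z. t < z \<Longrightarrow> \<forall>a\<in>S. a \<le> (f z - f t) / (z - t)"
    unfolding S_def using slope_mono3[OF cv] by auto
  have bdd: "bdd_above S" using bd[of "t+1"] by (auto simp: bdd_above_def)
  have up: "\<And>y. y < t \<Longrightarrow> (f t - f y) / (t - y) \<le> s"
    unfolding s_def by (rule cSup_upper[OF _ bdd]) (auto simp: S_def)
  have s0: "s \<ge> 0"
  proof -
    have "f (t - 1) \<le> f t" using mo by (auto simp: mono_def)
    then show ?thesis using up[of "t - 1"] by simp
  qed
  have low: "\<And>z. t < z \<Longrightarrow> s \<le> (f z - f t) / (z - t)"
    unfolding s_def using bd by (intro cSup_least[OF ne]) auto
  have "\<forall>y. f y \<ge> f t + s * (y - t)"
  proof
    fix y
    consider "y < t" | "y = t" | "t < y" by linarith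
    then show "f y \<ge> f t + s * (y - t)"
    proof cases
      case 1
      from up[OF 1] 1 have "f t - f y \<le> s * (t - y)" by (simp add: divide_le_eq)
      then show ?thesis by (simp add: algebra_simps)
    next
      case 2 then show ?thesis by simp
    next
      case 3
      from low[OF 3] 3 have "s * (y - t) \<le> f y - f t" by (simp add: le_divide_eq)
      then show ?thesis by simp
    qed
  qed
  with s0 show ?thesis by blast
qed

theorem mainTheorem6:
  fixes F :: "('a \<Rightarrow> ereal) set" and p :: "'a \<Rightarrow> ereal" and \<xi> :: "real \<Rightarrow> real"
  assumes "complete_lattice_cone F"
    and "\<forall>c::real. (\<lambda>_. ereal c) \<in> F"
    and "p \<in> F"
    and "\<forall>x. \<bar>p x\<bar> \<noteq> \<infinity>"
    and "convex_on UNIV \<xi>"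
    and "mono \<xi>"
  shows "(\<lambda>x. ereal (\<xi> (real_of_ereal (p x)))) \<in> F"
proof -
  obtain sl where sl: "\<And>t. sl t \<ge> 0" "\<And>t y. \<xi> y \<ge> \<xi> t + sl t * (y - t)"
  proof -
    have "\<forall>t. \<exists>s. s \<ge> 0 \<and> (\<forall>y. \<xi> y \<ge> \<xi> t + s * (y - t))"
      using subgrad[OF assms(5,6)] by blast
    then obtain sl where "\<forall>t. sl t \<ge> 0 \<and> (\<forall>y. \<xi> y \<ge> \<xi> t + sl t * (y - t))"
      by (rule choice[THEN exE])
    then show ?thesis using that by blast
  qed
  define h where "h t = (\<lambda>x. ereal (sl t) * p x + ereal 1 * ereal (\<xi> t - sl t * t))" for t
  have cone: "\<And>f g a b. f \<in> F \<Longrightarrow> g \<in> F \<Longrightarrow> (a::real) \<ge> 0 \<Longrightarrow> (b::real) \<ge> 0 \<Longrightarrow>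
      (\<lambda>x. ereal a * f x + ereal b * g x) \<in> F"
    and sup: "\<And>G. G \<subseteq> F \<Longrightarrow> G \<noteq> {} \<Longrightarrow> (\<lambda>x. SUP g\<in>G. g x) \<in> F"
    using assms(1) unfolding complete_lattice_cone_def by blast+
  have hF: "h ` UNIV \<subseteq> F"
  proof
    fix g assume "g \<in> range h"
    then obtain t where "g = h t" by blast
    moreover have "h t \<in> F" unfolding h_def
      by (rule cone[OF assms(3) assms(2)[rule_format] sl(1)]) simp
    ultimately show "g \<in> F" by simp
  qed
  have "(\<lambda>x. SUP g\<in>h ` UNIV. g x) \<in> F"
    by (rule sup[OF hF]) simp
  moreover have "(\<lambda>x. SUP g\<in>h ` UNIV. g x) = (\<lambda>x. ereal (\<xi> (real_of_ereal (p x))))"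
  proof
    fix x
    obtain r where r: "p x = ereal r" using assms(4)[rule_format, of x] by (cases "p x") auto
    have hv: "h t x = ereal (sl t * r + (\<xi> t - sl t * t))" for t
      by (simp add: h_def r)
    have "(SUP g\<in>h ` UNIV. g x) = (SUP t. h t x)"
      by (simp add: image_image)
    also have "\<dots> = ereal (\<xi> r)"
    proof (rule antisym)
      show "(SUP t. h t x) \<le> ereal (\<xi> r)"
      proof (rule SUP_least)
        fix t
        have "\<xi> t + sl t * (r - t) \<le> \<xi> r" by (rule sl(2))
        then have "sl t * r + (\<xi> t - sl t * t) \<le> \<xi> r"
          by (simp add: right_diff_distrib)
        then show "h t x \<le> ereal (\<xi> r)" unfolding hv by simp
      qed
      have "h r x = ereal (\<xi> r)" by (simp add: hv)
      then show "ereal (\<xi> r) \<le> (SUP t. h t x)"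
        using SUP_upper[of r UNIV "\<lambda>t. h t x"] by simp
    qed
    finally show "(SUP g\<in>h ` UNIV. g x) = ereal (\<xi> (real_of_ereal (p x)))"
      by (simp add: r)
  qed
  ultimately show ?thesis by (metis (no_types))
qed

end
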